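(* Let $R$ be a root system with Weyl group $W$ and let $f_\alpha,g_\alpha$ ($\alpha\in R$) be meromorphic functions on $\mathbb{C}$ with $f_{-\alpha}(z)=-f_\alpha(-z)$ and $g_{-\alpha}(z)=-g_\alpha(-z)$. If the assignment $[\alpha]\mapsto\mathbf{D}_\alpha=f_\alpha((\alpha,\xi))+g_\alpha((\alpha,\xi))s_\alpha$ defines a representation of $\mathcal{B}_W$ on $\mathcal{M}$, then each $f_\alpha$ is an odd function and $g_\alpha(z)=f_\alpha(z)\phi_\alpha(z)$ for a meromorphic function $\phi_\alpha$ satisfying $\phi_\alpha(z)\phi_\alpha(-z)=1$.
   Context: $V$ is a real Euclidean space with inner product $(\cdot,\cdot)$, $R\subset V$ a reduced crystallographic root system with positive roots $R_+$, $W$ its Weyl group and $s_\alpha$ the reflection in $\alpha$. $\mathcal{M}$ is the space of meromorphic functions on the complexification $V_{\mathbb{C}}$ (variable $\xi$); $s_\alpha$ acts on $\mathcal{M}$ by $(s_\alpha F)(\xi)=F(s_\alpha\xi)$, so $\mathbf{D}_\alpha F(\xi)=f_\alpha((\alpha,\xi))F(\xi)+g_\alpha((\alpha,\xi))F(s_\alpha\xi)$. Nichols–Woronowicz algebra: let $M_W$ be the complex vector space spanned by symbols $[\alpha]$, $\alpha\in R$, with $[-\alpha]=-[\alpha]$, with braiding $\psi([\alpha]\otimes[\beta])=[s_\alpha(\beta)]\otimes[\alpha]$. On $M_W^{\otimes m}$ let $\psi_i$ be $\psi$ acting in positions $i,i+1$; for $w\in S_m$ with reduced word $w=s_{i_1}\cdots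 s_{i_l}$ put $\psi_w=\psi_{i_1}\cdots\psi_{i_l}$, and $\mathrm{Sym}_m=\sum_{w\in S_m}\psi_w$. Then $\mathcal{B}_W$ is $T(M_W)$ modulo the two-sided ideal $\bigoplus_{m\ge2}\ker\mathrm{Sym}_m$ (in particular $[\alpha]^2=0$ in $\mathcal{B}_W$). "Defines a representation" means the assignment extends to an algebra homomorphism from $\mathcal{B}_W$ to the linear operators on $\mathcal{M}$. *)

theory Defs
  imports "HOL-Complex_Analysis.Complex_Analysis"
begin

definition rrefl :: "real^'n \<Rightarrow> real^'n \<Rightarrow> real^'n" where
  "rrefl a x = x - (2 * (a \<bullet> x) / (a \<bullet> a)) *\<^sub>R a"

definition root_system :: "(real^'n) set \<Rightarrow> bool" where
  "root_system R \<longleftrightarrow> finite R \<and> 0 \<notin> R \<and> span R = UNIV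
     \<and> (\<forall>a\<in>R. \<forall>b\<in>R. rrefl a b \<in> R)
     \<and> (\<forall>a\<in>R. \<forall>b\<in>R. 2 * (a \<bullet> b) / (a \<bullet> a) \<in> \<int>)
     \<and> (\<forall>a\<in>R. \<forall>c::real. c *\<^sub>R a \<in> R \<longrightarrow> c = 1 \<or> c = -1)"

definition positive_system :: "(real^'n) set \<Rightarrow> (real^'n) set \<Rightarrow> bool" where
  "positive_system R P \<longleftrightarrow>
     (\<exists>v. (\<forall>a\<in>R. a \<bullet> v \<noteq> 0) \<and> P = {a\<in>R. 0 < a \<bullet> v})"

definition cpair :: "real^'n \<Rightarrow> complex^'n \<Rightarrow> complex" where
  "cpair a \<xi> = (\<Sum>i\<in>UNIV. complex_of_real (a $ i) * \<xi> $ i)"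

definition cvec :: "real^'n \<Rightarrow> complex^'n" where
  "cvec a = (\<chi> i. complex_of_real (a $ i))"

definition crefl :: "real^'n \<Rightarrow> complex^'n \<Rightarrow> complex^'n" where
  "crefl a \<xi> = \<xi> - (2 * cpair a \<xi> / complex_of_real (a \<bullet> a)) *s cvec a"

text \<open>Holomorphic functions of several complex variables on an open set:
  complex (Frechet) differentiable, i.e. the derivative is complex linear.\<close>
definition holo_on :: "(complex^'n \<Rightarrow> complex) \<Rightarrow> (complex^'n) set \<Rightarrow> bool" where
  "holo_on F U \<longleftrightarrow> open U \<and>
     (\<forall>z\<in>U. \<exists>c::complex^'n. (F has_derivative (\<lambda>h. \<Sum>i\<in>UNIV. c $ i * h $ i)) (at z))"

text \<open>Meromorphic functions on V_C: locally a quotient of holomorphic functions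
  with denominator not identically zero (values on the zero set of the
  denominator are irrelevant junk).\<close>
definition mero :: "(complex^'n \<Rightarrow> complex) \<Rightarrow> bool" where
  "mero F \<longleftrightarrow> (\<forall>p. \<exists>U g h. open U \<and> connected U \<and> p \<in> U \<and> holo_on g U \<and> holo_on h U
       \<and> (\<exists>z\<in>U. h z \<noteq> 0) \<and> (\<forall>z\<in>U. h z \<noteq> 0 \<longrightarrow> F z = g z / h z))"

text \<open>Equality in the space M of meromorphic functions: agreement off a nowhere
  dense set.\<close>
definition mero_eq :: "(complex^'n \<Rightarrow> complex) \<Rightarrow> (complex^'n \<Rightarrow> complex) \<Rightarrow> bool" where
  "mero_eq F G \<longleftrightarrow> interior (closure {z. F z \<noteq> G z}) = {}"

definition Dop :: "(real^'n \<Rightarrow> complex \<Rightarrow> complex) \<Rightarrow> (real^'n \<Rightarrow> complex \<Rightarrow> complex)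
     \<Rightarrow> real^'n \<Rightarrow> (complex^'n \<Rightarrow> complex) \<Rightarrow> (complex^'n \<Rightarrow> complex)" where
  "Dop f g a F = (\<lambda>\<xi>. f a (cpair a \<xi>) * F \<xi> + g a (cpair a \<xi>) * F (crefl a \<xi>))"

text \<open>Image of the monomial [a_1][a_2]...[a_m] : D_{a_1} o ... o D_{a_m}.\<close>
definition Dword :: "(real^'n \<Rightarrow> complex \<Rightarrow> complex) \<Rightarrow> (real^'n \<Rightarrow> complex \<Rightarrow> complex)
     \<Rightarrow> (real^'n) list \<Rightarrow> (complex^'n \<Rightarrow> complex) \<Rightarrow> (complex^'n \<Rightarrow> complex)" where
  "Dword f g xs = foldr (\<lambda>a T. Dop f g a \<circ> T) xs id"

text \<open>M_W has basis [a], a in P (positive roots), with [-a] = -[a].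
  A basis vector of M_W^{\<otimes>m} is a list of m positive roots;
  an element of M_W^{\<otimes>m} is a coefficient function on such lists.\<close>
definition tbasis :: "(real^'n) set \<Rightarrow> nat \<Rightarrow> (real^'n) list set" where
  "tbasis P m = {xs. length xs = m \<and> set xs \<subseteq> P}"

text \<open>Writing a root b as sign * [positive representative].\<close>
definition rpos :: "(real^'n) set \<Rightarrow> real^'n \<Rightarrow> real^'n" where
  "rpos P b = (if b \<in> P then b else - b)"
definition rsgn :: "(real^'n) set \<Rightarrow> real^'n \<Rightarrow> complex" where
  "rsgn P b = (if b \<in> P then 1 else -1)"

text \<open>psi_i acting on a signed basis tensor, positions i, i+1 (0-based):
  [a] (x) [b] |-> [s_a b] (x) [a].\<close>
definition psi_basis :: "(real^'n) set \<Rightarrow> nat \<Rightarrow> complex \<times> (real^'n) list \<Rightarrow> complex \<times> (real^'n) list" where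
  "psi_basis P i sx = (let e = fst sx; xs = snd sx; a = xs ! i; b = xs ! Suc i; c = rrefl a b in
      (e * rsgn P c, xs[i := rpos P c, Suc i := a]))"

text \<open>psi_{i_1} ... psi_{i_l} (psi_{i_l} applied first).\<close>
definition psi_word :: "(real^'n) set \<Rightarrow> nat list \<Rightarrow> complex \<times> (real^'n) list \<Rightarrow> complex \<times> (real^'n) list" where
  "psi_word P ws sx = foldr (psi_basis P) ws sx"

definition word_perm :: "nat list \<Rightarrow> nat \<Rightarrow> nat" where
  "word_perm ws = foldr (\<lambda>i p. Transposition.transpose i (Suc i) \<circ> p) ws id"

definition reduced_word :: "nat \<Rightarrow> (nat \<Rightarrow> nat) \<Rightarrow> nat list \<Rightarrow> bool" where
  "reduced_word m w ws \<longleftrightarrow> (\<forall>i\<in>set ws. Suc i < m) \<and> word_perm ws = w \<and>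
     (\<forall>vs. (\<forall>i\<in>set vs. Suc i < m) \<and> word_perm vs = w \<longrightarrow> length ws \<le> length vs)"

definition red_word :: "nat \<Rightarrow> (nat \<Rightarrow> nat) \<Rightarrow> nat list" where
  "red_word m w = (SOME ws. reduced_word m w ws)"

definition Sym :: "(real^'n) set \<Rightarrow> nat \<Rightarrow> ((real^'n) list \<Rightarrow> complex) \<Rightarrow> ((real^'n) list \<Rightarrow> complex)" where
  "Sym P m x = (\<lambda>ys. \<Sum>xs\<in>tbasis P m. x xs *
      (\<Sum>w\<in>{w. w permutes {0..<m}}.
         (let r = psi_word P (red_word m w) (1, xs) in if snd r = ys then fst r else 0)))"

definition ker_Sym :: "(real^'n) set \<Rightarrow> nat \<Rightarrow> ((real^'n) list \<Rightarrow> complex) set" where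
  "ker_Sym P m = {x. (\<forall>xs. xs \<notin> tbasis P m \<longrightarrow> x xs = 0) \<and> Sym P m x = (\<lambda>_. 0)}"

text \<open>The assignment [a] |-> D_a defines a representation of B_W on M:
  the induced algebra map T(M_W) -> End(M) kills every ker Sym_m, m >= 2
  (hence the two-sided ideal they generate).\<close>
definition defines_rep :: "(real^'n) set \<Rightarrow> (real^'n \<Rightarrow> complex \<Rightarrow> complex)
     \<Rightarrow> (real^'n \<Rightarrow> complex \<Rightarrow> complex) \<Rightarrow> bool" where
  "defines_rep P f g \<longleftrightarrow>
     (\<forall>m\<ge>2. \<forall>x\<in>ker_Sym P m. \<forall>F. mero F \<longrightarrow>
        mero_eq (\<lambda>\<xi>. \<Sum>xs\<in>tbasis P m. x xs * Dword f g xs F \<xi>) (\<lambda>_. 0))"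

end

theory Submission
  imports Defs
begin

lemma cosparse_uminus:
  assumes "\<forall>\<^sub>\<approx>z. P z" shows "\<forall>\<^sub>\<approx>z. P (- (z::complex))"
proof -
  have "\<forall>x. eventually P (at x)" using assms by (simp add: eventually_cosparse_open_eq)
  then have "eventually (\<lambda>z. P (-z)) (at x)" for x
    using filtermap_at_minus[of x] eventually_filtermap[of P "\<lambda>z. -z" "at x"] by metis
  then show ?thesis by (simp add: eventually_cosparse_open_eq)
qed

lemma core:
  fixes F G :: "complex \<Rightarrow> complex"
  assumes mF: "F meromorphic_on UNIV" and mG: "G meromorphic_on UNIV"
   and e1: "\<forall>\<^sub>\<approx>u. F u ^ 2 + G u * G (-u) = 0" and e2: "\<forall>\<^sub>\<approx>u. G u * (F u + F (-u)) = 0"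
  shows "(\<forall>\<^sub>\<approx>z. F (-z) = - F z) \<and> (\<exists>\<phi>. \<phi> meromorphic_on UNIV \<and> (\<forall>\<^sub>\<approx>z. G z = F z * \<phi> z)
                \<and> (\<forall>\<^sub>\<approx>z. \<phi> z * \<phi> (- z) = 1))"
proof -
  have nb: "(cosparse (UNIV::complex set)) \<noteq> bot" by simp
  consider "\<forall>\<^sub>\<approx>z. G z = 0" | "\<forall>\<^sub>\<approx>z. G z \<noteq> 0"
    using meromorphic_imp_constant_or_avoid[OF mG open_UNIV connected_UNIV, of 0] by blast
  then show ?thesis
  proof cases
    case 1
    have F0: "\<forall>\<^sub>\<approx>z. F z = 0" using 1 e1 by eventually_elim simp
    have "\<forall>\<^sub>\<approx>z. F (-z) = 0" using cosparse_uminus[OF F0] .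
    with F0 have "\<forall>\<^sub>\<approx>z. F (-z) = - F z" by eventually_elim simp
    moreover have "\<forall>\<^sub>\<approx>z. G z = F z * (\<lambda>_. 1) z" using 1 F0 by eventually_elim simp
    ultimately show ?thesis by (intro conjI exI[of _ "\<lambda>_. 1"]) auto
  next
    case 2
    have odd: "\<forall>\<^sub>\<approx>z. F (-z) = - F z" using 2 e2 by eventually_elim (simp add: add_eq_0_iff)
    have G2: "\<forall>\<^sub>\<approx>z. G (-z) \<noteq> 0" using cosparse_uminus[OF 2] .
    consider "\<forall>\<^sub>\<approx>z. F z = 0" | "\<forall>\<^sub>\<approx>z. F z \<noteq> 0"
      using meromorphic_imp_constant_or_avoid[OF mF open_UNIV connected_UNIV, of 0] by blast
    then show ?thesis
    proof cases
      case 1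
      have "\<forall>\<^sub>\<approx>z::complex. False" using 1 2 G2 e1 by eventually_elim simp
      with nb show ?thesis by (simp add: eventually_False)
    next
      case 3: 2
      have m: "(\<lambda>z. G z / F z) meromorphic_on UNIV" by (intro meromorphic_intros mF mG)
      have a: "\<forall>\<^sub>\<approx>z. G z = F z * (G z / F z)" using 3 by eventually_elim simp
      have b: "\<forall>\<^sub>\<approx>z. (G z / F z) * (G (-z) / F (-z)) = 1"
        using 3 odd e1 by eventually_elim (auto simp: field_simps power2_eq_square add_eq_0_iff)
      show ?thesis using odd m a b by blast
    qed
  qed
qed
lemma perms2: "{w. w permutes {0..<(2::nat)}} = {id, Transposition.transpose 0 1}"
proof (intro equalityI subsetI)
  fix w assume "w \<in> {w. w permutes {0..<(2::nat)}}"
  then have w: "w permutes {0..<2}" by simp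
  have w0: "w 0 \<in> {0..<2}" and w1: "w 1 \<in> {0..<2}" using permutes_in_image[OF w] by auto
  have wn: "n \<ge> 2 \<Longrightarrow> w n = n" for n using permutes_not_in[OF w] by auto
  have inj: "w 0 \<noteq> w 1" using permutes_inj[OF w] by (metis inj_eq zero_neq_one)
  show "w \<in> {id, Transposition.transpose 0 1}"
  proof (cases "w 0 = 0")
    case True
    then have "w 1 = 1" using w1 inj by auto
    then have "w = id"
    proof (intro ext)
      fix n show "w n = id n"
        using True \<open>w 1 = 1\<close> wn[of n] by (cases "n = 0"; cases "n = 1") auto
    qed
    then show ?thesis by simp
  next
    case False
    then have "w 0 = 1" "w 1 = 0" using w0 w1 inj by auto
    then have "w = Transposition.transpose 0 1"
    proof (intro ext)
      fix n show "w n = Transposition.transpose 0 1 n"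
        using \<open>w 0 = 1\<close> \<open>w 1 = 0\<close> wn[of n] by (cases "n = 0"; cases "n = 1") auto
    qed
    then show ?thesis by simp
  qed
next
  fix w assume "w \<in> {id, Transposition.transpose 0 (1::nat)}"
  then show "w \<in> {w. w permutes {0..<(2::nat)}}"
    by (auto intro: permutes_swap_id)
qed

lemma reduced_le: "reduced_word m w ws \<Longrightarrow> reduced_word m w vs \<Longrightarrow> length ws \<le> length vs"
  unfolding reduced_word_def by blast

lemma reduced_perm: "reduced_word m w ws \<Longrightarrow> word_perm ws = w"
  unfolding reduced_word_def by blast

lemma reduced_set: "reduced_word m w ws \<Longrightarrow> i \<in> set ws \<Longrightarrow> Suc i < m"
  unfolding reduced_word_def by blast

lemma red_word_id: "red_word 2 id = []"
proof -
  have r: "reduced_word 2 id []" by (simp add: reduced_word_def word_perm_def)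
  then have "reduced_word 2 id (red_word 2 id)" unfolding red_word_def by (rule someI)
  from reduced_le[OF this r] show ?thesis by simp
qed

lemma red_word_tr: "red_word 2 (Transposition.transpose 0 1) = [0]"
proof -
  have ne: "Transposition.transpose 0 (1::nat) \<noteq> id"
    by (metis id_apply transpose_apply_first zero_neq_one)
  have r: "reduced_word 2 (Transposition.transpose 0 1) [0]"
    unfolding reduced_word_def
  proof (intro conjI allI impI ballI)
    show "word_perm [0] = Transposition.transpose 0 1" by (simp add: word_perm_def)
  next
    fix i assume "i \<in> set [0::nat]" then show "Suc i < 2" by simp
  next
    fix vs assume h: "(\<forall>i\<in>set vs. Suc i < 2) \<and> word_perm vs = Transposition.transpose 0 1"
    have "vs \<noteq> []"
    proof
      assume "vs = []" then have "word_perm vs = id" by (simp add: word_perm_def)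
      with h ne show False by simp
    qed
    then show "length [0::nat] \<le> length vs" by (cases vs) simp_all
  qed
  then have r2: "reduced_word 2 (Transposition.transpose 0 1) (red_word 2 (Transposition.transpose 0 1))"
    unfolding red_word_def by (rule someI)
  define ws where "ws = red_word 2 (Transposition.transpose 0 1)"
  have l: "length ws \<le> 1" using reduced_le[OF r2 r] unfolding ws_def by simp
  have ne2: "ws \<noteq> []"
  proof
    assume "ws = []" then have "word_perm ws = id" by (simp add: word_perm_def)
    with reduced_perm[OF r2] ne show False unfolding ws_def by simp
  qed
  obtain i vs where iv: "ws = i # vs" using ne2 by (cases ws) auto
  have "Suc i < 2" using reduced_set[OF r2, of i] iv unfolding ws_def by simp
  then have "ws = [0]" using l iv by simp
  then show ?thesis by (simp add: ws_def)
qed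

lemma rrefl_self: "a \<noteq> 0 \<Longrightarrow> rrefl a a = - a"
proof -
  assume "a \<noteq> 0"
  then have "a \<bullet> a \<noteq> 0" by simp
  then have "rrefl a a = a - 2 *\<^sub>R a" by (simp add: rrefl_def)
  also have "\<dots> = - a" by (simp add: scaleR_2)
  finally show ?thesis .
qed

lemma in_ker:
  assumes "a \<in> P" "- a \<notin> P" "a \<noteq> 0" "finite P"
  shows "(\<lambda>xs. if xs = [a,a] then 1 else 0) \<in> ker_Sym P 2"
proof -
  have tb: "[a,a] \<in> tbasis P 2" using assms by (simp add: tbasis_def)
  have fin: "finite (tbasis P 2)"
  proof -
    have "tbasis P 2 \<subseteq> {xs. set xs \<subseteq> P \<and> length xs = 2}" by (auto simp: tbasis_def)
    moreover have "finite {xs. set xs \<subseteq> P \<and> length xs = 2}" using finite_lists_length_eq[OF assms(4)] .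
    ultimately show ?thesis by (rule finite_subset)
  qed
  have pb: "psi_word P [0] (1, [a,a]) = (-1, [a,a])"
    using assms by (simp add: psi_word_def psi_basis_def rrefl_self rsgn_def rpos_def)
  have tne: "Transposition.transpose 0 (1::nat) \<noteq> id"
    by (metis id_apply transpose_apply_first zero_neq_one)
  show ?thesis
    unfolding ker_Sym_def
  proof (intro CollectI conjI allI impI)
    fix xs assume "xs \<notin> tbasis P 2" then show "(if xs = [a,a] then 1 else 0) = (0::complex)"
      using tb by auto
  next
    show "Sym P 2 (\<lambda>xs. if xs = [a,a] then 1 else 0) = (\<lambda>_. 0)"
    proof
      fix ys
      have "Sym P 2 (\<lambda>xs. if xs = [a,a] then 1 else 0) ys =
        (\<Sum>w\<in>{w. w permutes {0..<2}}.
         (let r = psi_word P (red_word 2 w) (1, [a,a]) in if snd r = ys then fst r else 0))"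
        unfolding Sym_def using fin tb
        by (simp add: if_distrib[of "\<lambda>c. c * _"] sum.delta' cong: if_cong)
      also have "\<dots> = 0"
        unfolding perms2 using tne pb using red_word_tr by (simp add: red_word_id psi_word_def)
      finally show "Sym P 2 (\<lambda>xs. if xs = [a,a] then 1 else 0) ys = 0" .
    qed
  qed
qed

lemma cpair_diff: "cpair a (x - y) = cpair a x - cpair a y"
  by (simp add: cpair_def algebra_simps sum_subtractf)

lemma cpair_smult: "cpair a (c *s x) = c * cpair a x"
  by (simp add: cpair_def algebra_simps sum_distrib_left)

lemma cpair_cvec: "cpair a (cvec a) = complex_of_real (a \<bullet> a)"
  by (simp add: cpair_def cvec_def inner_vec_def)

lemma cpair_crefl: "a \<noteq> 0 \<Longrightarrow> cpair a (crefl a \<xi>) = - cpair a \<xi>"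
  by (simp add: crefl_def cpair_diff cpair_smult cpair_cvec)

lemma cpair_bl: "bounded_linear (cpair a)"
proof -
  have "bounded_linear (\<lambda>\<xi>. \<Sum>i\<in>UNIV. complex_of_real (a $ i) * \<xi> $ i)"
    by (intro bounded_linear_sum bounded_linear_compose[OF bounded_linear_mult_right] bounded_linear_vec_nth)
  then show ?thesis unfolding cpair_def[abs_def] .
qed

lemma mero_one: "mero (\<lambda>_. 1)"
  unfolding mero_def
proof
  fix p :: "complex^'n"
  have "holo_on (\<lambda>_. 1) UNIV" unfolding holo_on_def
    by (auto intro!: exI[of _ 0])
  then show "\<exists>U g h. open U \<and> connected U \<and> p \<in> U \<and> holo_on g U \<and> holo_on h U
       \<and> (\<exists>z\<in>U. h z \<noteq> 0) \<and> (\<forall>z\<in>U. h z \<noteq> 0 \<longrightarrow> 1 = g z / h z)"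
    by (intro exI[of _ UNIV] exI[of _ "\<lambda>_. 1"]) auto
qed

lemma mero_cpair: fixes a :: "real^'n" shows "mero (cpair a)"
  unfolding mero_def
proof
  fix p :: "complex^'n"
  have h1: "holo_on (\<lambda>_. 1) UNIV" unfolding holo_on_def
    by (auto intro!: exI[of _ 0])
  have e: "(\<lambda>h. \<Sum>i\<in>UNIV. cvec a $ i * h $ i) = cpair a"
    by (simp add: cvec_def cpair_def[abs_def])
  have "holo_on (cpair a) UNIV" unfolding holo_on_def
    by (auto intro!: exI[of _ "cvec a"] simp only: e bounded_linear_imp_has_derivative[OF cpair_bl])
  with h1 show "\<exists>U g h. open U \<and> connected U \<and> p \<in> U \<and> holo_on g U \<and> holo_on h U
       \<and> (\<exists>z\<in>U. h z \<noteq> 0) \<and> (\<forall>z\<in>U. h z \<noteq> 0 \<longrightarrow> cpair a z = g z / h z)"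
    by (intro exI[of _ UNIV] exI[of _ "cpair a"] exI[of _ "\<lambda>_. 1"]) auto
qed

lemma transfer:
  fixes a :: "real^'n" and H :: "complex \<Rightarrow> complex"
  assumes a: "a \<noteq> 0" and m: "H meromorphic_on UNIV" and e: "mero_eq (\<lambda>\<xi>. H (cpair a \<xi>)) (\<lambda>_. 0)"
  shows "\<forall>\<^sub>\<approx>u. H u = 0"
proof (rule ccontr)
  assume "\<not> ?thesis"
  then have "\<forall>\<^sub>\<approx>u. H u \<noteq> 0"
    using meromorphic_imp_constant_or_avoid[OF m open_UNIV connected_UNIV, of 0] by blast
  then have "eventually (\<lambda>u. H u \<noteq> 0) (at 0)"
    using eventually_cosparse_imp_eventually_at by blast
  then obtain r where r: "r > 0" "\<And>u. u \<noteq> 0 \<Longrightarrow> dist u 0 < r \<Longrightarrow> H u \<noteq> 0"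
    unfolding eventually_at by blast
  define S where "S = {\<xi>. cpair a \<xi> \<noteq> 0 \<and> norm (cpair a \<xi>) < r}"
  have cont: "continuous_on UNIV (cpair a)" using cpair_bl linear_continuous_on by blast
  have oS: "open S" unfolding S_def
    by (intro open_Collect_conj open_Collect_neq open_Collect_less continuous_intros cont)
  define \<xi>0 where "\<xi>0 = (complex_of_real (r/2) / complex_of_real (a \<bullet> a)) *s cvec a"
  have aa: "a \<bullet> a \<noteq> 0" using a by simp
  have c0: "cpair a \<xi>0 = complex_of_real (r/2)"
    using aa by (simp add: \<xi>0_def cpair_smult cpair_cvec)
  have "\<xi>0 \<in> S" using r(1) by (simp add: S_def c0)
  have "S \<subseteq> {z. H (cpair a z) \<noteq> 0}" using r(2) by (auto simp: S_def dist_norm)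
  also have "\<dots> \<subseteq> closure {z. H (cpair a z) \<noteq> 0}" by (rule closure_subset)
  finally have "S \<subseteq> interior (closure {z. H (cpair a z) \<noteq> 0})" using oS by (rule interior_maximal)
  with \<open>\<xi>0 \<in> S\<close> e show False unfolding mero_eq_def by auto
qed

lemma fin_tbasis: "finite P \<Longrightarrow> finite (tbasis P m)"
proof -
  assume f: "finite P"
  have "tbasis P m \<subseteq> {xs. set xs \<subseteq> P \<and> length xs = m}" by (auto simp: tbasis_def)
  moreover have "finite {xs. set xs \<subseteq> P \<and> length xs = m}" using finite_lists_length_eq[OF f] .
  ultimately show ?thesis by (rule finite_subset)
qed

lemma Dop2:
  assumes "a \<noteq> 0"
  shows "Dop f g a (Dop f g a F) \<xi> = f a (cpair a \<xi>) * (f a (cpair a \<xi>) * F \<xi> + g a (cpair a \<xi>) * F (crefl a \<xi>))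
     + g a (cpair a \<xi>) * (f a (- cpair a \<xi>) * F (crefl a \<xi>) + g a (- cpair a \<xi>) * F (crefl a (crefl a \<xi>)))"
  unfolding Dop_def cpair_crefl[OF assms] by (rule refl)

lemma step:
  fixes f g :: "real^'n \<Rightarrow> complex \<Rightarrow> complex"
  assumes P: "a \<in> P" "- a \<notin> P" "a \<noteq> 0" "finite P" and rep: "defines_rep P f g"
    and mf: "f a meromorphic_on UNIV" and mg: "g a meromorphic_on UNIV"
  shows "(\<forall>\<^sub>\<approx>u. f a u ^ 2 + g a u * g a (-u) = 0) \<and> (\<forall>\<^sub>\<approx>u. g a u * (f a u + f a (-u)) = 0)"
proof -
  define x where "x = (\<lambda>xs. if xs = [a,a] then 1 else (0::complex))"
  have k: "x \<in> ker_Sym P 2" unfolding x_def using in_ker[OF P] .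
  have tb: "[a,a] \<in> tbasis P 2" using P by (simp add: tbasis_def)
  have D: "mero_eq (\<lambda>\<xi>. Dop f g a (Dop f g a F) \<xi>) (\<lambda>_. 0)" if "mero F" for F
  proof -
    have "mero_eq (\<lambda>\<xi>. \<Sum>xs\<in>tbasis P 2. x xs * Dword f g xs F \<xi>) (\<lambda>_. 0)"
      using rep k that unfolding defines_rep_def by auto
    moreover have "(\<lambda>\<xi>. \<Sum>xs\<in>tbasis P 2. x xs * Dword f g xs F \<xi>) = (\<lambda>\<xi>. Dop f g a (Dop f g a F) \<xi>)"
      using tb fin_tbasis[OF P(4)]
      by (simp add: x_def if_distrib[of "\<lambda>c. c * _"] sum.delta' Dword_def cong: if_cong)
    ultimately show ?thesis by simp
  qed
  define H1 where "H1 = (\<lambda>u. f a u * (f a u + g a u) + g a u * (f a (-u) + g a (-u)))"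
  define H2 where "H2 = (\<lambda>u. f a u * (f a u * u + g a u * (-u)) + g a u * (f a (-u) * (-u) + g a (-u) * u))"
  have an: "(\<lambda>u::complex. - u) analytic_on UNIV" by (intro analytic_intros)
  have mf': "(\<lambda>u. f a (- u)) meromorphic_on UNIV" by (rule meromorphic_on_compose[OF mf an]) simp
  have mg': "(\<lambda>u. g a (- u)) meromorphic_on UNIV" by (rule meromorphic_on_compose[OF mg an]) simp
  have m1: "H1 meromorphic_on UNIV" unfolding H1_def
    by (intro meromorphic_on_mult meromorphic_on_add mf mg mf' mg')
  have m2: "H2 meromorphic_on UNIV" unfolding H2_def
    by (intro meromorphic_on_mult meromorphic_on_add meromorphic_on_uminus meromorphic_on_id mf mg mf' mg')
  have "(\<lambda>\<xi>. Dop f g a (Dop f g a (\<lambda>_. 1)) \<xi>) = (\<lambda>\<xi>. H1 (cpair a \<xi>))"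
    unfolding Dop2[OF P(3)] H1_def by (simp only: mult_1_right)
  then have e1: "\<forall>\<^sub>\<approx>u. H1 u = 0" using D[OF mero_one] transfer[OF P(3) m1] by simp
  have "(\<lambda>\<xi>. Dop f g a (Dop f g a (cpair a)) \<xi>) = (\<lambda>\<xi>. H2 (cpair a \<xi>))"
    unfolding Dop2[OF P(3)] H2_def cpair_crefl[OF P(3)] minus_minus by (rule refl)
  then have e2: "\<forall>\<^sub>\<approx>u. H2 u = 0" using D[OF mero_cpair[of a]] transfer[OF P(3) m2] by simp
  have nz: "\<forall>\<^sub>\<approx>u::complex. u \<notin> {0}" by (intro eventually_not_in_cosparse) simp
  define A where "A = (\<lambda>u. f a u ^ 2 + g a u * g a (-u))"
  define B where "B = (\<lambda>u. g a u * (f a u + f a (-u)))"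
  have "\<forall>\<^sub>\<approx>u. A u = 0 \<and> B u = 0" using e1 e2 nz
  proof eventually_elim
    case (elim u)
    have i1: "H1 u = A u + B u" unfolding H1_def A_def B_def by (simp add: algebra_simps power2_eq_square)
    have i2: "H2 u = u * (A u - B u)" unfolding H2_def A_def B_def by (simp add: algebra_simps power2_eq_square)
    from elim i2 have "A u - B u = 0" by simp
    with elim i1 show ?case by (simp add: add_eq_0_iff)
  qed
  then show ?thesis unfolding A_def B_def by (auto elim: eventually_mono)
qed

theorem lemma1p2:
  fixes R P :: "(real^'n) set"
    and f g :: "real^'n \<Rightarrow> complex \<Rightarrow> complex"
  assumes "root_system R"
    and "positive_system R P"
    and "\<forall>a\<in>R. f a meromorphic_on UNIV \<and> g a meromorphic_on UNIV"
    and "\<forall>a\<in>R. (\<forall>\<^sub>\<approx>z. f (- a) z = - f a (- z)) \<and> (\<forall>\<^sub>\<approx>z. g (- a) z = - g a (- z))"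
    and "defines_rep P f g"
  shows "\<forall>a\<in>R. (\<forall>\<^sub>\<approx>z. f a (- z) = - f a z) \<and>
           (\<exists>\<phi>. \<phi> meromorphic_on UNIV \<and> (\<forall>\<^sub>\<approx>z. g a z = f a z * \<phi> z)
                \<and> (\<forall>\<^sub>\<approx>z. \<phi> z * \<phi> (- z) = 1))"
proof -
  from assms(1) have finR: "finite R" and zR: "0 \<notin> R" and cl: "\<forall>a\<in>R. \<forall>b\<in>R. rrefl a b \<in> R"
    unfolding root_system_def by blast+
  from assms(2) obtain v where v: "\<forall>a\<in>R. a \<bullet> v \<noteq> 0" and Pdef: "P = {a\<in>R. 0 < a \<bullet> v}"
    unfolding positive_system_def by blast
  have finP: "finite P" using finR Pdef by auto
  have key: "(\<forall>\<^sub>\<approx>u. f b u ^ 2 + g b u * g b (-u) = 0) \<and> (\<forall>\<^sub>\<approx>u. g b u * (f b u + f b (-u)) = 0)"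
    if bR: "b \<in> R" and bv: "0 < b \<bullet> v" for b
  proof -
    have "b \<in> P" using bR bv Pdef by simp
    moreover have "- b \<notin> P" using bv Pdef by simp
    moreover have "b \<noteq> 0" using bR zR by auto
    ultimately show ?thesis using step[OF _ _ _ finP assms(5)] assms(3) bR by blast
  qed
  show ?thesis
  proof
    fix a assume aR: "a \<in> R"
    have a0: "a \<noteq> 0" using aR zR by auto
    have naR: "- a \<in> R" using cl aR rrefl_self[OF a0] by metis
    have mf: "f a meromorphic_on UNIV" and mg: "g a meromorphic_on UNIV" using assms(3) aR by auto
    show "(\<forall>\<^sub>\<approx>z. f a (- z) = - f a z) \<and>
           (\<exists>\<phi>. \<phi> meromorphic_on UNIV \<and> (\<forall>\<^sub>\<approx>z. g a z = f a z * \<phi> z)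
                \<and> (\<forall>\<^sub>\<approx>z. \<phi> z * \<phi> (- z) = 1))"
    proof (cases "0 < a \<bullet> v")
      case True
      from key[OF aR True] show ?thesis using core[OF mf mg] by blast
    next
      case False
      define b where "b = - a"
      have bR: "b \<in> R" using naR b_def by simp
      have bv: "0 < b \<bullet> v" using False v aR b_def by (auto simp: inner_minus_left)
      from key[OF bR bv] have S1: "\<forall>\<^sub>\<approx>u. f b u ^ 2 + g b u * g b (-u) = 0"
        and S2: "\<forall>\<^sub>\<approx>u. g b u * (f b u + f b (-u)) = 0" by auto
      have hf: "\<forall>\<^sub>\<approx>z. f a z = - f b (- z)" and hg: "\<forall>\<^sub>\<approx>z. g a z = - g b (- z)"
        using assms(4) bR unfolding b_def by auto
      have hf': "\<forall>\<^sub>\<approx>z. f a (- z) = - f b z" using cosparse_uminus[OF hf] by simp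
      have hg': "\<forall>\<^sub>\<approx>z. g a (- z) = - g b z" using cosparse_uminus[OF hg] by simp
      have S1': "\<forall>\<^sub>\<approx>u. f b (-u) ^ 2 + g b (-u) * g b u = 0" using cosparse_uminus[OF S1] by simp
      have S2': "\<forall>\<^sub>\<approx>u. g b (-u) * (f b (-u) + f b u) = 0" using cosparse_uminus[OF S2] by simp
      have e1: "\<forall>\<^sub>\<approx>u. f a u ^ 2 + g a u * g a (-u) = 0"
        using hf hg hf' hg' S1' by eventually_elim (simp add: power2_eq_square)
      have e2: "\<forall>\<^sub>\<approx>u. g a u * (f a u + f a (-u)) = 0"
        using hf hg hf' hg' S2' by eventually_elim (simp add: algebra_simps)
      show ?thesis using core[OF mf mg e1 e2] .
    qed
  qed
qed

end
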